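(* Assume the setup below. Two multipartitions $\boldsymbol{\lambda},\boldsymbol{\mu}\in\mathcal{P}(l,n)$ satisfy $\tau_{\mathbf{r}}(w(\boldsymbol{\lambda}))_J=\tau_{\mathbf{r}}(w(\boldsymbol{\mu}))_J$ if and only if $C_{[t]}(\boldsymbol{\lambda})=C_{[t]}(\boldsymbol{\mu})$ (as multisets) for all $0\le t\le d$.
   Context: Fix positive integers $l,n$. A partition $\lambda=(\lambda_1\ge\lambda_2\ge\dots)$ has $\lambda_i=0$ for large $i$; $Y(\lambda)=\{(a,b):a\ge1,1\le b\le\lambda_a\}$; the content of $(a,b)$ is $b-a$. $\mathcal{P}(l,n)$ is the set of $l$-multipartitions $\boldsymbol{\lambda}=(\lambda^{(0)},\dots,\lambda^{(l-1)})$ of $n$. For $r\in\mathbb{Z}$, $\beta^r(\lambda)=(\lambda_i+r+1-i)_{i\ge1}$; a strictly decreasing integer sequence stabilising with respect to $r$ (i.e. $C_i=r+1-i$ for large $i$) is $\beta^r$ of a unique partition. For a strictly decreasing integer sequence $C$, $S^iC=(C_1+i,C_2+i,\dots)$. For an $l$-tuple $\mathbf{C}=(C^0,\dots,C^{l-1})$ of strictly decreasing integer sequences, $\chi(\mathbf{C})=\{l(C^q_i-1)+q+1:0\le q\le l-1,\,i\ge1\}$. A node is removable if deleting it leaves a Young diagram; for $J\subseteq\{0,\dots,l-1\}$ it is $J$-removable if removable with content congruent mod $l$ to some $j\in J$; the $J$-heart $\lambda_J$ is obtained by removing $J$-removable nodes as long as possible. Parameters: $H_1,\dots,H_{l-1}\in\mathbb{Q}$,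 $H_0=-(H_1+\dots+H_{l-1})$, $d$ a positive integer with $dH_i\in\mathbb{Z}$; $\theta=(1+H_0,H_1,\dots,H_{l-1})$. $S_l$ = permutations of $\{0,\dots,l-1\}$ generated by $s_i$ ($1\le i\le l-1$) transposing $i-1,i$, acting on $\mathbb{Q}^l$ by: $s_i\cdot\theta$ has entry $\theta_{i-1}+\theta_i$ at $i-1$, $-\theta_i$ at $i$, $\theta_i+\theta_{i+1}$ at $i+1$, otherwise unchanged (indices mod $l$). $R\subset\mathbb{Z}^l$ is generated by $\alpha_i=-e_{i-1}+2e_i-e_{i+1}$ (indices mod $l$); $\tilde{S}_l=R\rtimes S_l$ acts on $\{\theta\in\mathbb{Q}^l:\sum\theta_i=1\}$ with $R$ by translations; $\mathbb{Z}^l_0$ = integer vectors with coordinate sum $0$; $\phi(\mathbf{r})=\sum_j(r_{j-1}-r_j)e_j$ (indices mod $l$). Fix $w_\theta=\phi(\mathbf{r})w\in\tilde{S}_l$ ($\mathbf{r}\in\mathbb{Z}^l_0$, $w\in S_l$) with $\boldsymbol{\epsilon}=w_\theta\cdot\theta$ satisfying $0\le\varepsilon_i\le1$; $J=\{j:\varepsilon_j=0\}$; then $d\boldsymbol{\epsilon}\in\mathbb{Z}^l$. Let $m_i(\mathbf{c})=c_0+\dots+c_i$ and $I_t=\{p:m_p(d\boldsymbol{\epsilon})=t\}$ for $0\le t\le d$. For $\mathbf{s}\in\mathbb{Z}^l$ with $s=\sum s_i$, $\tau_{\mathbf{s}}(\boldsymbol{\lambda})$ is the partition whose $s$-shifted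 $\beta$-number is $\chi(\beta^{s_0}(\lambda^{(0)}),\dots,\beta^{s_{l-1}}(\lambda^{(l-1)}))$ arranged decreasingly; $w(\boldsymbol{\lambda})$ has $p$-th component $\lambda^{(w^{-1}(p))}$. Put $C^p(\boldsymbol{\lambda})=\beta^{r_p}(\lambda^{(w^{-1}(p))})$; for $1\le t\le d-1$, $C_{[t]}(\boldsymbol{\lambda})=\biguplus_{p\in I_t}C^p(\boldsymbol{\lambda})$ (multiset union) and $C_{[0]}(\boldsymbol{\lambda})=C_{[d]}(\boldsymbol{\lambda})=\biguplus_{p\in I_0}S^{-1}C^p(\boldsymbol{\lambda})\uplus\biguplus_{p\in I_d}C^p(\boldsymbol{\lambda})$. *)

theory Defs
  imports Complex_Main
begin

text \<open>A partition is a 1-indexed sequence lam 1 >= lam 2 >= ... of naturals,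
  eventually zero; the (unused) value at index 0 is normalised to 0.\<close>
definition is_partition :: "(nat \<Rightarrow> nat) \<Rightarrow> bool" where
  "is_partition lam \<longleftrightarrow> lam 0 = 0 \<and> (\<forall>i\<ge>1. lam (Suc i) \<le> lam i) \<and> finite {i. lam i \<noteq> 0}"

definition psize :: "(nat \<Rightarrow> nat) \<Rightarrow> nat" where
  "psize lam = sum lam {i. lam i \<noteq> 0}"

definition young :: "(nat \<Rightarrow> nat) \<Rightarrow> (nat \<times> nat) set" where
  "young lam = {(a, b). 1 \<le> a \<and> 1 \<le> b \<and> b \<le> lam a}"

definition content :: "nat \<times> nat \<Rightarrow> int" where
  "content x = int (snd x) - int (fst x)"

definition multipartitions :: "nat \<Rightarrow> nat \<Rightarrow> (nat \<Rightarrow> nat) list set" where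
  "multipartitions l n = {lams. length lams = l \<and> (\<forall>q<l. is_partition (lams ! q))
        \<and> (\<Sum>q<l. psize (lams ! q)) = n}"

definition removable :: "(nat \<Rightarrow> nat) \<Rightarrow> nat \<times> nat \<Rightarrow> bool" where
  "removable lam x \<longleftrightarrow> x \<in> young lam \<and> (\<exists>mu. is_partition mu \<and> young mu = young lam - {x})"

definition J_removable :: "nat \<Rightarrow> nat set \<Rightarrow> (nat \<Rightarrow> nat) \<Rightarrow> nat \<times> nat \<Rightarrow> bool" where
  "J_removable l J lam x \<longleftrightarrow> removable lam x \<and> (\<exists>j\<in>J. content x mod int l = int j mod int l)"

definition heart_step :: "nat \<Rightarrow> nat set \<Rightarrow> (nat \<Rightarrow> nat) \<Rightarrow> (nat \<Rightarrow> nat) \<Rightarrow> bool" where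
  "heart_step l J lam mu \<longleftrightarrow> is_partition mu \<and> (\<exists>x. J_removable l J lam x \<and> young mu = young lam - {x})"

definition heart :: "nat \<Rightarrow> nat set \<Rightarrow> (nat \<Rightarrow> nat) \<Rightarrow> (nat \<Rightarrow> nat)" where
  "heart l J lam = (THE mu. (heart_step l J)\<^sup>*\<^sup>* lam mu \<and> \<not> (\<exists>x. J_removable l J mu x))"

definition beta :: "int \<Rightarrow> (nat \<Rightarrow> nat) \<Rightarrow> nat \<Rightarrow> int" where
  "beta r lam i = int (lam i) + r + 1 - int i"

definition beta_set :: "int \<Rightarrow> (nat \<Rightarrow> nat) \<Rightarrow> int set" where
  "beta_set r lam = {beta r lam i | i. 1 \<le> i}"

text \<open>tau_s(lams): the partition whose (sum s)-shifted beta-sequence is chi(...) arranged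
  decreasingly, i.e. whose set of beta-numbers equals the set chi(...).\<close>
definition tau :: "nat \<Rightarrow> (nat \<Rightarrow> int) \<Rightarrow> (nat \<Rightarrow> nat) list \<Rightarrow> (nat \<Rightarrow> nat)" where
  "tau l s lams = (THE mu. is_partition mu \<and>
      beta_set (\<Sum>q<l. s q) mu =
        {int l * (c - 1) + int q + 1 | q c. q < l \<and> c \<in> beta_set (s q) (lams ! q)})"

definition swp :: "nat \<Rightarrow> nat \<Rightarrow> nat \<Rightarrow> nat" where
  "swp a b x = (if x = a then b else if x = b then a else x)"

text \<open>The permutation s_{i1} o ... o s_{ik} given by a word ws = [i1,...,ik], s_i = (i-1 i).\<close>
definition wperm :: "nat list \<Rightarrow> nat \<Rightarrow> nat" where
  "wperm ws = foldr (\<lambda>i f. swp (i - 1) i \<circ> f) ws id"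

definition wmp :: "nat list \<Rightarrow> (nat \<Rightarrow> nat) list \<Rightarrow> (nat \<Rightarrow> nat) list" where
  "wmp ws lams = map (\<lambda>p. lams ! (inv (wperm ws) p)) [0..<length lams]"

definition alpha :: "nat \<Rightarrow> nat \<Rightarrow> nat \<Rightarrow> rat" where
  "alpha l i j = (if j = i then 2 else 0) - (if j = (i + l - 1) mod l then 1 else 0)
                 - (if j = (i + 1) mod l then 1 else 0)"

definition sact :: "nat \<Rightarrow> nat \<Rightarrow> (nat \<Rightarrow> rat) \<Rightarrow> (nat \<Rightarrow> rat)" where
  "sact l i th = (\<lambda>j. th j - th i * alpha l i j)"

definition wact :: "nat \<Rightarrow> nat list \<Rightarrow> (nat \<Rightarrow> rat) \<Rightarrow> (nat \<Rightarrow> rat)" where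
  "wact l ws th = foldr (sact l) ws th"

definition phi :: "nat \<Rightarrow> (nat \<Rightarrow> int) \<Rightarrow> nat \<Rightarrow> rat" where
  "phi l r j = of_int (r ((j + l - 1) mod l) - r j)"

definition theta :: "nat \<Rightarrow> (nat \<Rightarrow> rat) \<Rightarrow> nat \<Rightarrow> rat" where
  "theta l H j = (if j = 0 then 1 - (\<Sum>i\<in>{1..<l}. H i) else H j)"

definition eps :: "nat \<Rightarrow> (nat \<Rightarrow> rat) \<Rightarrow> (nat \<Rightarrow> int) \<Rightarrow> nat list \<Rightarrow> nat \<Rightarrow> rat" where
  "eps l H r ws j = phi l r j + wact l ws (theta l H) j"

definition Jset :: "nat \<Rightarrow> (nat \<Rightarrow> rat) \<Rightarrow> (nat \<Rightarrow> int) \<Rightarrow> nat list \<Rightarrow> nat set" where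
  "Jset l H r ws = {j. j < l \<and> eps l H r ws j = 0}"

definition Iset :: "nat \<Rightarrow> nat \<Rightarrow> (nat \<Rightarrow> rat) \<Rightarrow> (nat \<Rightarrow> int) \<Rightarrow> nat list \<Rightarrow> nat \<Rightarrow> nat set" where
  "Iset l d H r ws t = {p. p < l \<and> (\<Sum>i\<le>p. of_nat d * eps l H r ws i) = of_nat t}"

definition Cp :: "nat list \<Rightarrow> (nat \<Rightarrow> int) \<Rightarrow> (nat \<Rightarrow> nat) list \<Rightarrow> nat \<Rightarrow> int set" where
  "Cp ws r lams p = beta_set (r p) (lams ! (inv (wperm ws) p))"

text \<open>C_[t](lams) as a multiset of integers, represented by its multiplicity function.\<close>
definition Cmult :: "nat \<Rightarrow> nat \<Rightarrow> (nat \<Rightarrow> rat) \<Rightarrow> (nat \<Rightarrow> int) \<Rightarrow> nat list \<Rightarrow> nat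
      \<Rightarrow> (nat \<Rightarrow> nat) list \<Rightarrow> int \<Rightarrow> nat" where
  "Cmult l d H r ws t lams = (\<lambda>x.
     if 1 \<le> t \<and> t \<le> d - 1 then card {p \<in> Iset l d H r ws t. x \<in> Cp ws r lams p}
     else card {p \<in> Iset l d H r ws 0. x + 1 \<in> Cp ws r lams p}
          + card {p \<in> Iset l d H r ws d. x \<in> Cp ws r lams p})"

end

theory Submission
  imports Defs
begin



lemma part_mono:
  assumes "is_partition lam" "1 \<le> i" "i \<le> j"
  shows "lam j \<le> lam i"
  using assms(3,2)
proof (induction j rule: dec_induct)
  case base then show ?case by simp
next
  case (step k)
  have "lam (Suc k) \<le> lam k" using assms(1) step(1) \<open>1 \<le> i\<close> unfolding is_partition_def by auto
  then show ?case using step by simp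
qed

lemma beta_strict:
  assumes "is_partition lam" "1 \<le> i" "i < j"
  shows "beta r lam j < beta r lam i"
  using part_mono[OF assms(1,2), of j] assms(3) unfolding beta_def by simp

lemma beta_inj:
  assumes "is_partition lam" "1 \<le> i" "1 \<le> j" "beta r lam i = beta r lam j"
  shows "i = j"
  using beta_strict[OF assms(1) assms(2), of j r] beta_strict[OF assms(1) assms(3), of i r] assms(4)
  by (cases "i < j"; cases "j < i") auto

lemma beta_inj_on:
  assumes "is_partition lam"
  shows "inj_on (beta r lam) {1..}"
  using beta_inj[OF assms] by (auto simp: inj_on_def)

lemma mem_beta_set: "x \<in> beta_set r lam \<longleftrightarrow> (\<exists>i\<ge>1. x = beta r lam i)"
  unfolding beta_set_def by auto

lemma beta_above:
  assumes "is_partition lam" "1 \<le> i"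
  shows "{y \<in> beta_set r lam. beta r lam i < y} = beta r lam ` {1..<i}"
proof
  show "{y \<in> beta_set r lam. beta r lam i < y} \<subseteq> beta r lam ` {1..<i}"
  proof
    fix y assume y: "y \<in> {y \<in> beta_set r lam. beta r lam i < y}"
    then obtain j where j: "j \<ge> 1" "y = beta r lam j" by (auto simp: mem_beta_set)
    have "j < i"
    proof (rule ccontr)
      assume "\<not> j < i"
      then have "beta r lam j \<le> beta r lam i"
        using beta_strict[OF assms(1,2), of j r] by (cases "i = j") auto
      then show False using y j by auto
    qed
    then show "y \<in> beta r lam ` {1..<i}" using j by auto
  qed
next
  show "beta r lam ` {1..<i} \<subseteq> {y \<in> beta_set r lam. beta r lam i < y}"
    using beta_strict[OF assms(1)] by (auto simp: mem_beta_set)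
qed

lemma card_beta_above:
  assumes "is_partition lam" "1 \<le> i"
  shows "card {y \<in> beta_set r lam. beta r lam i < y} = i - 1"
proof -
  have "inj_on (beta r lam) {1..<i}" using beta_inj_on[OF assms(1), of r]
    by (rule inj_on_subset) auto
  then show ?thesis using beta_above[OF assms] by (simp add: card_image)
qed

lemma beta_set_inj:
  assumes "is_partition lam" "is_partition mu" "beta_set r lam = beta_set r mu"
  shows "lam = mu"
proof
  fix i
  show "lam i = mu i"
  proof (cases "i = 0")
    case True then show ?thesis using assms unfolding is_partition_def by simp
  next
    case False
    then have i: "1 \<le> i" by simp
    have "beta r lam i \<in> beta_set r lam" using i by (auto simp: mem_beta_set)
    then have "beta r lam i \<in> beta_set r mu" using assms(3) by simp
    then obtain j where j: "j \<ge> 1" "beta r lam i = beta r mu j" by (auto simp: mem_beta_set)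
    have "i - 1 = j - 1"
      using card_beta_above[OF assms(1) i, of r] card_beta_above[OF assms(2) j(1), of r] assms(3) j(2)
      by simp
    then have "i = j" using i j by simp
    then show ?thesis using j unfolding beta_def by simp
  qed
qed




lemma add_node:
  assumes lam: "is_partition lam" and y: "y \<in> beta_set s lam" and y1: "y + 1 \<notin> beta_set s lam"
  shows "\<exists>lam'. is_partition lam' \<and> beta_set s lam' = insert (y + 1) (beta_set s lam - {y})"
proof -
  obtain a where a: "a \<ge> 1" "y = beta s lam a" using y by (auto simp: mem_beta_set)
  define lam' where "lam' = lam(a := Suc (lam a))"
  have prev: "lam (a - 1) \<ge> Suc (lam a)" if "a \<ge> 2"
  proof -
    have "beta s lam a < beta s lam (a - 1)" using beta_strict[OF lam, of "a - 1" a s] that by simp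
    moreover have "beta s lam (a - 1) \<noteq> y + 1"
    proof -
      have "beta s lam (a - 1) \<in> beta_set s lam"
        unfolding mem_beta_set using that by (intro exI[of _ "a - 1"]) simp
      then show ?thesis using y1 by auto
    qed
    ultimately have "beta s lam (a - 1) \<ge> y + 2" using a by simp
    then show ?thesis using a that unfolding beta_def by (simp add: of_nat_diff)
  qed
  have part: "is_partition lam'"
    unfolding is_partition_def
  proof (intro conjI allI impI)
    show "lam' 0 = 0" using lam a unfolding lam'_def is_partition_def by auto
  next
    fix i :: nat assume i: "i \<ge> 1"
    show "lam' (Suc i) \<le> lam' i"
    proof (cases "Suc i = a")
      case True
      then have "i \<ge> 1" "a \<ge> 2" using i by auto
      then show ?thesis using prev True unfolding lam'_def by auto
    next
      case False
      then show ?thesis using lam i unfolding lam'_def is_partition_def by auto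
    qed
  next
    have "{i. lam' i \<noteq> 0} \<subseteq> insert a {i. lam i \<noteq> 0}" unfolding lam'_def by auto
    then show "finite {i. lam' i \<noteq> 0}" using lam unfolding is_partition_def
      by (meson finite_insert finite_subset)
  qed
  have bl: "beta s lam' i = (if i = a then y + 1 else beta s lam i)" for i
    using a unfolding lam'_def beta_def by auto
  have "beta_set s lam' = insert (y + 1) (beta_set s lam - {y})"
  proof
    show "beta_set s lam' \<subseteq> insert (y + 1) (beta_set s lam - {y})"
    proof
      fix x assume "x \<in> beta_set s lam'"
      then obtain i where i: "i \<ge> 1" "x = beta s lam' i" by (auto simp: mem_beta_set)
      show "x \<in> insert (y + 1) (beta_set s lam - {y})"
      proof (cases "i = a")
        case True then show ?thesis using i bl by simp
      next
        case False
        then have "beta s lam i \<noteq> y" using beta_inj[OF lam i(1) a(1)] a by auto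
        then show ?thesis using i bl False by (auto simp: mem_beta_set)
      qed
    qed
  next
    show "insert (y + 1) (beta_set s lam - {y}) \<subseteq> beta_set s lam'"
    proof
      fix x assume x: "x \<in> insert (y + 1) (beta_set s lam - {y})"
      show "x \<in> beta_set s lam'"
      proof (cases "x = y + 1")
        case True then show ?thesis using bl[of a] a by (auto simp: mem_beta_set)
      next
        case False
        then obtain i where i: "i \<ge> 1" "x = beta s lam i" "x \<noteq> y" using x by (auto simp: mem_beta_set)
        then have "i \<noteq> a" using a by auto
        then show ?thesis using i bl[of i] by (auto simp: mem_beta_set)
      qed
    qed
  qed
  then show ?thesis using part by blast
qed

lemma beta_set_empty: "beta_set s (\<lambda>_. 0) = {..s}"
proof
  show "beta_set s (\<lambda>_. 0) \<subseteq> {..s}" by (auto simp: mem_beta_set beta_def)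
  show "{..s} \<subseteq> beta_set s (\<lambda>_. 0)"
  proof
    fix x assume "x \<in> {..s}"
    then have "nat (s + 1 - x) \<ge> 1" "x = beta s (\<lambda>_. 0) (nat (s + 1 - x))" by (auto simp: beta_def)
    then show "x \<in> beta_set s (\<lambda>_. 0)" by (auto simp: mem_beta_set)
  qed
qed

lemma is_partition_empty: "is_partition (\<lambda>_. 0)"
  unfolding is_partition_def by simp

lemma down_closed:
  assumes "\<forall>x\<in>X. x - 1 \<in> (X::int set)" "x \<in> X" "z \<le> x"
  shows "z \<in> X"
proof -
  have "\<forall>k::nat. x - int k \<in> X"
  proof
    fix k :: nat show "x - int k \<in> X"
      by (induction k) (use assms in \<open>auto simp: algebra_simps\<close>)
  qed
  from this[rule_format, of "nat (x - z)"] show ?thesis using assms(3) by simp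
qed

lemma exists_partition_aux:
  "\<forall>X. sum (\<lambda>x. nat (x - a)) (X \<inter> {a<..}) = m \<longrightarrow> {..a} \<subseteq> X \<longrightarrow> finite (X \<inter> {a<..})
     \<longrightarrow> int (card (X \<inter> {a<..})) = s - a \<longrightarrow> (\<exists>lam. is_partition lam \<and> beta_set s lam = X)"
proof (induction m rule: less_induct)
  case (less m)
  show ?case
  proof (intro allI impI)
    fix X :: "int set"
    assume m: "sum (\<lambda>x. nat (x - a)) (X \<inter> {a<..}) = m" and low: "{..a} \<subseteq> X"
      and fin: "finite (X \<inter> {a<..})" and c: "int (card (X \<inter> {a<..})) = s - a"
    show "\<exists>lam. is_partition lam \<and> beta_set s lam = X"
    proof (cases "\<exists>x\<in>X. x - 1 \<notin> X")
      case True
      then obtain x where x: "x \<in> X" "x - 1 \<notin> X" by blast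
      have xa: "x - 1 > a"
      proof (rule ccontr)
        assume "\<not> x - 1 > a" then have "x - 1 \<in> {..a}" by simp
        then show False using x low by blast
      qed
      define X' where "X' = insert (x - 1) (X - {x})"
      have W: "X' \<inter> {a<..} = insert (x - 1) ((X \<inter> {a<..}) - {x})"
        using xa unfolding X'_def by auto
      have fin': "finite (X' \<inter> {a<..})" using W fin by simp
      have c': "int (card (X' \<inter> {a<..})) = s - a"
      proof -
        have "x \<in> X \<inter> {a<..}" using x xa by auto
        then have "card (X \<inter> {a<..}) = Suc (card ((X \<inter> {a<..}) - {x}))"
          using fin by (metis card_Suc_Diff1)
        moreover have "card (X' \<inter> {a<..}) = Suc (card ((X \<inter> {a<..}) - {x}))"
          using W fin x by (simp add: card_insert_if)
        ultimately show ?thesis using c by simp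
      qed
      have low': "{..a} \<subseteq> X'" using low xa unfolding X'_def by auto
      have m': "sum (\<lambda>x. nat (x - a)) (X' \<inter> {a<..}) < m"
      proof -
        have xin: "x \<in> X \<inter> {a<..}" using x xa by auto
        have "sum (\<lambda>x. nat (x - a)) (X \<inter> {a<..}) = nat (x - a) + sum (\<lambda>x. nat (x - a)) ((X \<inter> {a<..}) - {x})"
          using fin xin by (rule sum.remove)
        moreover have "sum (\<lambda>x. nat (x - a)) (X' \<inter> {a<..}) = nat (x - 1 - a) + sum (\<lambda>x. nat (x - a)) ((X \<inter> {a<..}) - {x})"
          using W fin x by simp
        ultimately show ?thesis using m xa by simp
      qed
      obtain lam' where lam': "is_partition lam'" "beta_set s lam' = X'"
        using less[rule_format, OF m' refl low' fin' c'] by blast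
      have "x - 1 \<in> beta_set s lam'" "x - 1 + 1 \<notin> beta_set s lam'" using lam' unfolding X'_def by auto
      from add_node[OF lam'(1) this] obtain lam'' where
        "is_partition lam''" "beta_set s lam'' = insert (x - 1 + 1) (beta_set s lam' - {x - 1})" by blast
      moreover have "insert (x - 1 + 1) (beta_set s lam' - {x - 1}) = X"
        using lam'(2) x unfolding X'_def by auto
      ultimately show ?thesis by auto
    next
      case False
      then have dc: "\<forall>x\<in>X. x - 1 \<in> X" by blast
      have XA: "X \<inter> {a..} = insert a (X \<inter> {a<..})" using low by auto
      have finA: "finite (X \<inter> {a..})" using XA fin by simp
      define mx where "mx = Max (X \<inter> {a..})"
      have mxin: "mx \<in> X" "a \<le> mx" using finA XA unfolding mx_def
        by (metis (no_types, lifting) Int_iff Max_in atLeast_iff insert_not_empty)+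
      have Xeq: "X = {..mx}"
      proof
        show "X \<subseteq> {..mx}"
        proof
          fix x assume "x \<in> X"
          then show "x \<in> {..mx}" using mxin finA unfolding mx_def
            by (cases "x \<ge> a") auto
        qed
        show "{..mx} \<subseteq> X" using down_closed[OF dc mxin(1)] by auto
      qed
      have "X \<inter> {a<..} = {a<..mx}" using Xeq by auto
      then have "int (card (X \<inter> {a<..})) = mx - a" using mxin by simp
      then have "mx = s" using c by simp
      then show ?thesis using Xeq beta_set_empty[of s] is_partition_empty by metis
    qed
  qed
qed

lemma exists_partition:
  assumes "{..a} \<subseteq> X" "finite (X \<inter> {a<..})" "int (card (X \<inter> {a<..})) = s - a"
  shows "\<exists>lam. is_partition lam \<and> beta_set s lam = X"
  using exists_partition_aux assms by blast




lemma nat_eq_by_le: "(\<forall>b::nat\<ge>1. b \<le> m \<longleftrightarrow> b \<le> n) \<Longrightarrow> m = n"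
  by (metis le_antisym le_refl less_one not_le not_less_eq_eq)

lemma young_mem: "(i, b) \<in> young f \<longleftrightarrow> 1 \<le> i \<and> 1 \<le> b \<and> b \<le> f i"
  unfolding young_def by auto

lemma remove_step:
  assumes lam: "is_partition lam" and mu: "is_partition mu"
    and x: "x \<in> young lam" and Y: "young mu = young lam - {x}"
  shows "\<exists>a. a \<ge> 1 \<and> x = (a, lam a) \<and> lam a \<ge> 1 \<and> mu = lam(a := lam a - 1)"
proof -
  obtain a c where ac: "x = (a, c)" by (cases x)
  have a: "a \<ge> 1" "c \<ge> 1" "c \<le> lam a" using x ac by (auto simp: young_mem)
  have c: "c = lam a"
  proof (rule ccontr)
    assume "c \<noteq> lam a"
    then have "(a, c + 1) \<in> young mu" using Y a ac by (auto simp: young_mem)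
    then have "(a, c) \<in> young mu" using a by (auto simp: young_mem)
    then show False using Y ac by auto
  qed
  have "mu = lam(a := lam a - 1)"
  proof
    fix i show "mu i = (lam(a := lam a - 1)) i"
    proof (cases "i = 0")
      case True then show ?thesis using lam mu a unfolding is_partition_def by auto
    next
      case False
      have "\<forall>b\<ge>1. b \<le> mu i \<longleftrightarrow> b \<le> (lam(a := lam a - 1)) i"
      proof (intro allI impI)
        fix b :: nat assume b: "b \<ge> 1"
        have "b \<le> mu i \<longleftrightarrow> (i, b) \<in> young mu" using b False by (auto simp: young_mem)
        also have "\<dots> \<longleftrightarrow> (i, b) \<in> young lam \<and> (i, b) \<noteq> (a, lam a)" using Y ac c by auto
        also have "\<dots> \<longleftrightarrow> b \<le> (lam(a := lam a - 1)) i" using b False by (auto simp: young_mem)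
        finally show "b \<le> mu i \<longleftrightarrow> b \<le> (lam(a := lam a - 1)) i" .
      qed
      then show ?thesis by (rule nat_eq_by_le)
    qed
  qed
  then show ?thesis using a ac c by auto
qed

lemma beta_set_update:
  assumes lam: "is_partition lam" and a: "a \<ge> 1"
    and bl: "\<And>i. beta s mu i = (if i = a then z else beta s lam i)"
  shows "beta_set s mu = insert z (beta_set s lam - {beta s lam a})"
proof
  show "beta_set s mu \<subseteq> insert z (beta_set s lam - {beta s lam a})"
  proof
    fix x assume "x \<in> beta_set s mu"
    then obtain i where i: "i \<ge> 1" "x = beta s mu i" by (auto simp: mem_beta_set)
    show "x \<in> insert z (beta_set s lam - {beta s lam a})"
    proof (cases "i = a")
      case True then show ?thesis using i bl by simp
    next
      case False
      then have "beta s lam i \<noteq> beta s lam a" using beta_inj[OF lam i(1) a] by auto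
      then show ?thesis using i bl False by (auto simp: mem_beta_set)
    qed
  qed
next
  show "insert z (beta_set s lam - {beta s lam a}) \<subseteq> beta_set s mu"
  proof
    fix x assume x: "x \<in> insert z (beta_set s lam - {beta s lam a})"
    show "x \<in> beta_set s mu"
    proof (cases "x = z")
      case True then show ?thesis using bl[of a] a by (auto simp: mem_beta_set)
    next
      case False
      then obtain i where i: "i \<ge> 1" "x = beta s lam i" "x \<noteq> beta s lam a" using x by (auto simp: mem_beta_set)
      then have "i \<noteq> a" by auto
      then show ?thesis using i bl[of i] by (auto simp: mem_beta_set)
    qed
  qed
qed

lemma not_beta_between:
  assumes lam: "is_partition lam" and a: "a \<ge> 1"
    and lt: "beta s lam (Suc a) < z" "z < beta s lam a"
  shows "z \<notin> beta_set s lam"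
proof
  assume "z \<in> beta_set s lam"
  then obtain i where i: "i \<ge> 1" "z = beta s lam i" by (auto simp: mem_beta_set)
  show False
  proof (cases "i \<le> a")
    case True
    then have "beta s lam a \<le> beta s lam i" using beta_strict[OF lam i(1), of a s] by (cases "i = a") auto
    then show ?thesis using lt i by simp
  next
    case False
    then have "beta s lam i \<le> beta s lam (Suc a)"
      using beta_strict[OF lam, of "Suc a" i s] by (cases "i = Suc a") auto
    then show ?thesis using lt i by simp
  qed
qed

lemma heart_step_beta:
  assumes lam: "is_partition lam" and hs: "heart_step l J lam mu"
  shows "is_partition mu \<and> (\<exists>x. x \<in> beta_set 0 lam \<and> x - 1 \<notin> beta_set 0 lam
      \<and> (\<exists>j\<in>J. (x - 1) mod int l = int j mod int l)
      \<and> beta_set 0 mu = insert (x - 1) (beta_set 0 lam - {x}))"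
proof -
  obtain y where mu: "is_partition mu" and jr: "J_removable l J lam y" and Y: "young mu = young lam - {y}"
    using hs unfolding heart_step_def by blast
  have yin: "y \<in> young lam" using jr unfolding J_removable_def removable_def by blast
  obtain a where a: "a \<ge> 1" "y = (a, lam a)" "lam a \<ge> 1" "mu = lam(a := lam a - 1)"
    using remove_step[OF lam mu yin Y] by blast
  define x where "x = beta 0 lam a"
  have xin: "x \<in> beta_set 0 lam" using a unfolding x_def by (auto simp: mem_beta_set)
  have "mu (Suc a) \<le> mu a" using mu a unfolding is_partition_def by auto
  then have "lam (Suc a) \<le> lam a - 1" using a by simp
  then have "beta 0 lam (Suc a) < x - 1" using a unfolding x_def beta_def by (simp add: of_nat_diff)
  then have xn: "x - 1 \<notin> beta_set 0 lam"
    using not_beta_between[OF lam a(1), of 0 "x - 1"] unfolding x_def by simp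
  have cont: "content y = x - 1" using a unfolding x_def content_def beta_def by simp
  have jj: "\<exists>j\<in>J. (x - 1) mod int l = int j mod int l" using jr cont unfolding J_removable_def by simp
  have "beta_set 0 mu = insert (x - 1) (beta_set 0 lam - {beta 0 lam a})"
    by (rule beta_set_update[OF lam a(1)]) (use a in \<open>auto simp: beta_def x_def of_nat_diff\<close>)
  then show ?thesis using mu xin xn jj unfolding x_def by blast
qed

lemma normal_beta:
  assumes lam: "is_partition lam" and nr: "\<not> (\<exists>y. J_removable l J lam y)"
    and x: "x \<in> beta_set 0 lam" and xn: "x - 1 \<notin> beta_set 0 lam"
  shows "\<not> (\<exists>j\<in>J. (x - 1) mod int l = int j mod int l)"
proof
  assume jj: "\<exists>j\<in>J. (x - 1) mod int l = int j mod int l"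
  obtain a where a: "a \<ge> 1" "x = beta 0 lam a" using x by (auto simp: mem_beta_set)
  have suc_in: "beta 0 lam (Suc a) \<in> beta_set 0 lam" by (auto simp: mem_beta_set)
  have lt: "beta 0 lam (Suc a) < x" using beta_strict[OF lam a(1), of "Suc a" 0] a by simp
  then have le: "beta 0 lam (Suc a) < x - 1" using suc_in xn by (cases "beta 0 lam (Suc a) = x - 1") auto
  then have la: "lam (Suc a) + 1 \<le> lam a" using a unfolding beta_def by simp
  define mu where "mu = lam(a := lam a - 1)"
  have pmu: "is_partition mu"
    unfolding is_partition_def
  proof (intro conjI allI impI)
    show "mu 0 = 0" using lam a unfolding mu_def is_partition_def by auto
  next
    fix i :: nat assume i: "i \<ge> 1"
    show "mu (Suc i) \<le> mu i"
      using lam i la unfolding mu_def is_partition_def by (cases "i = a"; cases "Suc i = a") auto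
  next
    have "{i. mu i \<noteq> 0} \<subseteq> {i. lam i \<noteq> 0}" unfolding mu_def by auto
    then show "finite {i. mu i \<noteq> 0}" using lam unfolding is_partition_def
      by (meson finite_subset)
  qed
  have "young mu = young lam - {(a, lam a)}"
    unfolding mu_def young_def using la by (auto split: if_splits)
  moreover have "(a, lam a) \<in> young lam" using a la by (auto simp: young_mem)
  ultimately have "removable lam (a, lam a)" unfolding removable_def using pmu by blast
  moreover have "content (a, lam a) = x - 1" using a unfolding content_def beta_def by simp
  ultimately have "J_removable l J lam (a, lam a)" using jj unfolding J_removable_def by simp
  then show False using nr by blast
qed




definition cnt :: "(int \<Rightarrow> int) \<Rightarrow> int set \<Rightarrow> int \<Rightarrow> nat" where
  "cnt kap B v = card {x \<in> B. kap x = v}"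

locale kp =
  fixes l :: nat and J :: "nat set" and kap :: "int \<Rightarrow> int"
  assumes kstep: "\<And>x. (\<exists>j\<in>J. (x - 1) mod int l = int j mod int l) \<longleftrightarrow> kap x = kap (x - 1)"
    and kmono1: "\<And>x. kap (x - 1) \<le> kap x"
    and kfin: "\<And>v. finite {x. kap x = v}"
begin

lemma kmono: "z \<le> w \<Longrightarrow> kap z \<le> kap w"
proof -
  assume zw: "z \<le> w"
  have "\<forall>k::nat. kap z \<le> kap (z + int k)"
  proof
    fix k :: nat show "kap z \<le> kap (z + int k)"
    proof (induction k)
      case 0 then show ?case by simp
    next
      case (Suc k)
      have "kap (z + int k) \<le> kap (z + int (Suc k))" using kmono1[of "z + int (Suc k)"] by simp
      then show ?case using Suc by simp
    qed
  qed
  from this[rule_format, of "nat (w - z)"] show ?thesis using zw by simp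
qed

lemma cnt_move:
  assumes "y \<in> B" "y - 1 \<notin> B" "kap y = kap (y - 1)"
  shows "cnt kap (insert (y - 1) (B - {y})) = cnt kap B"
proof
  fix v
  let ?S = "{x \<in> B. kap x = v}"
  have fin: "finite ?S" using kfin[of v] by (rule finite_subset[rotated]) auto
  show "cnt kap (insert (y - 1) (B - {y})) v = cnt kap B v"
  proof (cases "kap y = v")
    case True
    then have "{x \<in> insert (y - 1) (B - {y}). kap x = v} = insert (y - 1) (?S - {y})"
      using assms by auto
    moreover have "y \<in> ?S" "y - 1 \<notin> ?S - {y}" using True assms by auto
    moreover have "finite (?S - {y})" using fin by simp
    ultimately have "card {x \<in> insert (y - 1) (B - {y}). kap x = v} = Suc (card (?S - {y}))"
      by (metis card_insert_disjoint)
    also have "\<dots> = card ?S" using fin \<open>y \<in> ?S\<close> by (rule card_Suc_Diff1)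
    finally show ?thesis unfolding cnt_def .
  next
    case False
    then have "{x \<in> insert (y - 1) (B - {y}). kap x = v} = ?S"
      using assms by auto
    then show ?thesis unfolding cnt_def by simp
  qed
qed

lemma step_cnt:
  assumes "is_partition lam" "heart_step l J lam mu"
  shows "is_partition mu \<and> cnt kap (beta_set 0 mu) = cnt kap (beta_set 0 lam)"
proof -
  obtain x where "is_partition mu" "x \<in> beta_set 0 lam" "x - 1 \<notin> beta_set 0 lam"
    "\<exists>j\<in>J. (x - 1) mod int l = int j mod int l"
    "beta_set 0 mu = insert (x - 1) (beta_set 0 lam - {x})"
    using heart_step_beta[OF assms] by blast
  then show ?thesis using cnt_move kstep by metis
qed

lemma star_cnt:
  assumes "(heart_step l J)\<^sup>*\<^sup>* lam mu" "is_partition lam"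
  shows "is_partition mu \<and> cnt kap (beta_set 0 mu) = cnt kap (beta_set 0 lam)"
  using assms
proof (induction rule: rtranclp_induct)
  case base then show ?case by simp
next
  case (step y z) then show ?case using step_cnt by metis
qed

definition dcl :: "int set \<Rightarrow> bool" where
  "dcl B \<longleftrightarrow> (\<forall>x\<in>B. kap x = kap (x - 1) \<longrightarrow> x - 1 \<in> B)"

lemma normal_dcl:
  assumes "is_partition lam" "\<not> (\<exists>y. J_removable l J lam y)"
  shows "dcl (beta_set 0 lam)"
  unfolding dcl_def using normal_beta[OF assms] kstep by blast

lemma dcl_class:
  assumes "dcl B" "x \<in> B" "z \<le> x" "kap z = kap x"
  shows "z \<in> B"
proof -
  have "\<forall>x. x \<in> B \<longrightarrow> z \<le> x \<longrightarrow> kap z = kap x \<longrightarrow> nat (x - z) = k \<longrightarrow> z \<in> B" for k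
  proof (induction k)
    case 0 then show ?case by auto
  next
    case (Suc k)
    show ?case
    proof (intro allI impI)
      fix x assume x: "x \<in> B" "z \<le> x" "kap z = kap x" "nat (x - z) = Suc k"
      then have zx: "z \<le> x - 1" by simp
      have "kap z \<le> kap (x - 1)" using kmono[OF zx] .
      moreover have "kap (x - 1) \<le> kap x" by (rule kmono1)
      ultimately have e: "kap (x - 1) = kap x" "kap z = kap (x - 1)" using x by auto
      then have "x - 1 \<in> B" using assms(1) x unfolding dcl_def by auto
      then show "z \<in> B" using Suc.IH zx e x by auto
    qed
  qed
  then show ?thesis using assms by blast
qed

lemma dcl_unique:
  assumes "dcl B" "dcl B'" "cnt kap B = cnt kap B'"
  shows "B \<subseteq> B'"
proof
  fix y assume y: "y \<in> B"
  show "y \<in> B'"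
  proof (rule ccontr)
    assume ny: "y \<notin> B'"
    let ?S = "{x. kap x = kap y}"
    have fin: "finite ?S" by (rule kfin)
    have "{x \<in> B'. kap x = kap y} \<subseteq> {x \<in> ?S. x < y}"
    proof
      fix z assume z: "z \<in> {x \<in> B'. kap x = kap y}"
      have "\<not> y \<le> z"
      proof
        assume "y \<le> z" then have "y \<in> B'" using dcl_class[OF assms(2), of z y] z by auto
        then show False using ny by simp
      qed
      then show "z \<in> {x \<in> ?S. x < y}" using z by auto
    qed
    then have c1: "card {x \<in> B'. kap x = kap y} \<le> card {x \<in> ?S. x < y}"
      using fin by (intro card_mono) auto
    have "{x \<in> ?S. x < y} \<subset> {x \<in> ?S. x \<le> y}" by auto
    then have c2: "card {x \<in> ?S. x < y} < card {x \<in> ?S. x \<le> y}"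
      using fin by (intro psubset_card_mono) auto
    have "{x \<in> ?S. x \<le> y} \<subseteq> {x \<in> B. kap x = kap y}"
      using dcl_class[OF assms(1) y] by auto
    then have c3: "card {x \<in> ?S. x \<le> y} \<le> card {x \<in> B. kap x = kap y}"
      using fin by (intro card_mono) (auto intro: finite_subset[OF _ fin])
    have "cnt kap B (kap y) = cnt kap B' (kap y)" using assms(3) by simp
    then show False using c1 c2 c3 unfolding cnt_def by simp
  qed
qed

lemma finite_young:
  assumes "is_partition lam" shows "finite (young lam)"
proof -
  have "young lam \<subseteq> Sigma {i. lam i \<noteq> 0} (\<lambda>i. {1..lam i})" unfolding young_def by auto
  moreover have "finite (Sigma {i. lam i \<noteq> 0} (\<lambda>i. {1..lam i}))"
    using assms unfolding is_partition_def by (intro finite_SigmaI) auto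
  ultimately show ?thesis by (rule finite_subset)
qed

lemma heart_exists:
  "is_partition lam \<Longrightarrow> \<exists>mu. (heart_step l J)\<^sup>*\<^sup>* lam mu \<and> \<not> (\<exists>y. J_removable l J mu y)"
proof (induction "card (young lam)" arbitrary: lam rule: less_induct)
  case less
  show ?case
  proof (cases "\<exists>y. J_removable l J lam y")
    case False then show ?thesis by blast
  next
    case True
    then obtain y mu where y: "J_removable l J lam y" "is_partition mu" "young mu = young lam - {y}"
      "y \<in> young lam"
      unfolding J_removable_def removable_def by blast
    then have hs: "heart_step l J lam mu" unfolding heart_step_def by blast
    have "card (young mu) < card (young lam)"
      using y finite_young[OF less.prems] by (metis card_Diff1_less)
    then obtain nu where "(heart_step l J)\<^sup>*\<^sup>* mu nu \<and> \<not> (\<exists>y. J_removable l J nu y)"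
      using less y by blast
    then show ?thesis using hs by (meson converse_rtranclp_into_rtranclp)
  qed
qed

lemma heart_unique:
  assumes "is_partition lam"
    "(heart_step l J)\<^sup>*\<^sup>* lam mu1" "\<not> (\<exists>y. J_removable l J mu1 y)"
    "(heart_step l J)\<^sup>*\<^sup>* lam mu2" "\<not> (\<exists>y. J_removable l J mu2 y)"
  shows "mu1 = mu2"
proof -
  have p1: "is_partition mu1" "cnt kap (beta_set 0 mu1) = cnt kap (beta_set 0 lam)"
    using star_cnt[OF assms(2,1)] by auto
  have p2: "is_partition mu2" "cnt kap (beta_set 0 mu2) = cnt kap (beta_set 0 lam)"
    using star_cnt[OF assms(4,1)] by auto
  have d1: "dcl (beta_set 0 mu1)" using normal_dcl[OF p1(1) assms(3)] .
  have d2: "dcl (beta_set 0 mu2)" using normal_dcl[OF p2(1) assms(5)] .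
  have "beta_set 0 mu1 = beta_set 0 mu2"
    using dcl_unique[OF d1 d2] dcl_unique[OF d2 d1] p1 p2 by auto
  then show ?thesis using beta_set_inj p1 p2 by blast
qed

lemma heart_props:
  assumes "is_partition lam"
  shows "is_partition (heart l J lam) \<and> cnt kap (beta_set 0 (heart l J lam)) = cnt kap (beta_set 0 lam)
    \<and> dcl (beta_set 0 (heart l J lam))"
proof -
  have ex1: "\<exists>!mu. (heart_step l J)\<^sup>*\<^sup>* lam mu \<and> \<not> (\<exists>y. J_removable l J mu y)"
    using heart_exists[OF assms] heart_unique[OF assms] by blast
  have h: "(heart_step l J)\<^sup>*\<^sup>* lam (heart l J lam) \<and> \<not> (\<exists>y. J_removable l J (heart l J lam) y)"
    unfolding heart_def by (rule theI'[OF ex1])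
  then show ?thesis using star_cnt[OF _ assms] normal_dcl by blast
qed

lemma heart_iff:
  assumes "is_partition lam" "is_partition mu"
  shows "heart l J lam = heart l J mu \<longleftrightarrow> cnt kap (beta_set 0 lam) = cnt kap (beta_set 0 mu)"
proof
  assume "heart l J lam = heart l J mu"
  then show "cnt kap (beta_set 0 lam) = cnt kap (beta_set 0 mu)"
    using heart_props[OF assms(1)] heart_props[OF assms(2)] by metis
next
  assume c: "cnt kap (beta_set 0 lam) = cnt kap (beta_set 0 mu)"
  have h1: "is_partition (heart l J lam)" "cnt kap (beta_set 0 (heart l J lam)) = cnt kap (beta_set 0 lam)"
    "dcl (beta_set 0 (heart l J lam))" using heart_props[OF assms(1)] by auto
  have h2: "is_partition (heart l J mu)" "cnt kap (beta_set 0 (heart l J mu)) = cnt kap (beta_set 0 mu)"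
    "dcl (beta_set 0 (heart l J mu))" using heart_props[OF assms(2)] by auto
  have "beta_set 0 (heart l J lam) = beta_set 0 (heart l J mu)"
    using dcl_unique[OF h1(3) h2(3)] dcl_unique[OF h2(3) h1(3)] h1(2) h2(2) c by auto
  then show "heart l J lam = heart l J mu" using beta_set_inj h1(1) h2(1) by blast
qed

end




lemma mod_pred_suc: assumes "b < (l::nat)" shows "(Suc b mod l + l - Suc 0) mod l = b"
proof (cases "Suc b < l")
  case True then show ?thesis using assms by simp
next
  case False then have "Suc b = l" using assms by simp
  then show ?thesis by simp
qed

lemma sum_alpha: assumes "i < l" shows "(\<Sum>j<l. alpha l i j) = 0"
proof -
  have "(\<Sum>j<l. alpha l i j) = (\<Sum>j<l. (if j = i then 2 else 0)) - (\<Sum>j<l. (if j = (i + l - 1) mod l then 1 else 0))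
      - (\<Sum>j<l. (if j = (i + 1) mod l then 1 else 0))"
    unfolding alpha_def by (simp add: sum_subtractf)
  also have "\<dots> = 0" using assms by (simp add: sum.delta)
  finally show ?thesis .
qed

lemma sum_sact: assumes "i < l" shows "(\<Sum>j<l. sact l i th j) = (\<Sum>j<l. th j)"
proof -
  have "(\<Sum>j<l. sact l i th j) = (\<Sum>j<l. th j) - th i * (\<Sum>j<l. alpha l i j)"
    unfolding sact_def by (simp add: sum_subtractf sum_distrib_left)
  then show ?thesis using sum_alpha[OF assms] by simp
qed

lemma sum_wact: assumes "set ws \<subseteq> {1..<l}" shows "(\<Sum>j<l. wact l ws th j) = (\<Sum>j<l. th j)"
  using assms
proof (induction ws)
  case Nil then show ?case by (simp add: wact_def)
next
  case (Cons i ws)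
  have "wact l (i # ws) th = sact l i (wact l ws th)" by (simp add: wact_def)
  then show ?case using Cons sum_sact[of i l "wact l ws th"] by simp
qed

lemma alpha_int: "alpha l i j \<in> \<int>"
  unfolding alpha_def by auto

lemma wact_int: assumes "set ws \<subseteq> {1..<l}" "\<forall>j<l. of_nat d * th j \<in> \<int>"
  shows "\<forall>j<l. of_nat d * wact l ws th j \<in> \<int>"
  using assms(1)
proof (induction ws)
  case Nil then show ?case using assms(2) by (simp add: wact_def)
next
  case (Cons i ws)
  have il: "i < l" using Cons.prems by auto
  have "wact l (i # ws) th = sact l i (wact l ws th)" by (simp add: wact_def)
  moreover have "of_nat d * sact l i (wact l ws th) j \<in> \<int>" if "j < l" for j
  proof -
    have "of_nat d * sact l i (wact l ws th) j = of_nat d * wact l ws th j - (of_nat d * wact l ws th i) * alpha l i j"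
      unfolding sact_def by (simp add: algebra_simps)
    moreover have "of_nat d * wact l ws th j \<in> \<int>" "of_nat d * wact l ws th i \<in> \<int>"
      using Cons that il by auto
    ultimately show ?thesis using alpha_int by (metis Ints_diff Ints_mult)
  qed
  ultimately show ?case by simp
qed

lemma sum_phi: assumes "0 < l" shows "(\<Sum>j<l. phi l r j) = 0"
proof -
  have "(\<Sum>j<l. r ((j + l - 1) mod l)) = (\<Sum>j<l. r j)"
    by (rule sum.reindex_bij_witness[where i = "\<lambda>j. (j + 1) mod l" and j = "\<lambda>j. (j + l - 1) mod l"])
       (use assms mod_pred_suc in \<open>auto simp: mod_add_left_eq mod_Suc_eq\<close>)
  then show ?thesis unfolding phi_def by (simp add: sum_subtractf flip: of_int_sum)
qed

lemma sum_theta: assumes "0 < l" shows "(\<Sum>j<l. theta l H j) = 1"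
proof -
  have "{..<l} = insert 0 {1..<l}" using assms by auto
  then have "(\<Sum>j<l. theta l H j) = theta l H 0 + (\<Sum>j\<in>{1..<l}. theta l H j)" by simp
  also have "(\<Sum>j\<in>{1..<l}. theta l H j) = (\<Sum>j\<in>{1..<l}. H j)" unfolding theta_def by simp
  finally show ?thesis unfolding theta_def by simp
qed

lemma divmod_eq: fixes L k q :: int assumes "0 \<le> q" "q < L"
  shows "(L * k + q) div L = k \<and> (L * k + q) mod L = q"
proof -
  have "(q + k * L) div L = q div L + k" using assms by simp
  moreover have "q div L = 0" "q mod L = q" using assms by simp_all
  moreover have "(q + k * L) mod L = q mod L" by simp
  ultimately show ?thesis by (simp add: algebra_simps)
qed

locale params =
  fixes l d :: nat and H :: "nat \<Rightarrow> rat" and r :: "nat \<Rightarrow> int" and ws :: "nat list"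
  assumes lpos: "0 < l" and dpos: "0 < d"
    and Hint: "\<forall>i\<in>{1..<l}. of_nat d * H i \<in> \<int>"
    and rsum: "(\<Sum>q<l. r q) = 0"
    and wsl: "set ws \<subseteq> {1..<l}"
    and epsb: "\<forall>i<l. 0 \<le> eps l H r ws i \<and> eps l H r ws i \<le> 1"
begin

abbreviation "E \<equiv> eps l H r ws"

lemma sumE: "(\<Sum>j<l. E j) = 1"
  unfolding eps_def using sum_phi[OF lpos, of r] sum_wact[OF wsl, of "theta l H"] sum_theta[OF lpos, of H]
  by (simp add: sum.distrib)

lemma Eint: "j < l \<Longrightarrow> of_nat d * E j \<in> \<int>"
proof -
  assume j: "j < l"
  have th: "\<forall>j<l. of_nat d * theta l H j \<in> \<int>"
  proof (intro allI impI)
    fix j assume "j < l"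
    show "of_nat d * theta l H j \<in> \<int>"
    proof (cases "j = 0")
      case True
      have "of_nat d * theta l H j = of_nat d - (\<Sum>i\<in>{1..<l}. of_nat d * H i)"
        using True unfolding theta_def by (simp add: algebra_simps sum_distrib_left)
      moreover have "(\<Sum>i\<in>{1..<l}. of_nat d * H i) \<in> \<int>" using Hint by (intro Ints_sum) auto
      ultimately show ?thesis by (metis Ints_diff Ints_of_nat)
    next
      case False then show ?thesis using Hint \<open>j < l\<close> unfolding theta_def by auto
    qed
  qed
  have "of_nat d * E j = of_nat d * phi l r j + of_nat d * wact l ws (theta l H) j"
    unfolding eps_def by (simp add: algebra_simps)
  moreover have "of_nat d * phi l r j \<in> \<int>" unfolding phi_def by simp
  moreover have "of_nat d * wact l ws (theta l H) j \<in> \<int>" using wact_int[OF wsl th] j by auto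
  ultimately show ?thesis by (metis Ints_add)
qed

definition M :: "nat \<Rightarrow> rat" where "M q = (\<Sum>i\<le>q. of_nat d * E i)"
definition K :: "nat \<Rightarrow> int" where "K q = \<lfloor>M q\<rfloor>"

lemma M_int: "q < l \<Longrightarrow> M q \<in> \<int>"
  unfolding M_def using Eint by (intro Ints_sum) auto

lemma K_eq: "q < l \<Longrightarrow> of_int (K q) = M q"
  unfolding K_def using M_int by (metis Ints_cases floor_of_int)

lemma M_suc: "M (Suc q) = M q + of_nat d * E (Suc q)"
  unfolding M_def by simp

lemma M_0: "M 0 = of_nat d * E 0"
  unfolding M_def by simp

lemma M_last: "M (l - 1) = of_nat d"
proof -
  have "{..l - 1} = {..<l}" using lpos by auto
  then show ?thesis unfolding M_def using sumE by (simp add: sum_distrib_left[symmetric])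
qed

lemma M_nonneg: "q < l \<Longrightarrow> 0 \<le> M q"
  unfolding M_def using epsb by (intro sum_nonneg) auto

lemma M_le: "q < l \<Longrightarrow> M q \<le> of_nat d"
proof -
  assume q: "q < l"
  have "M q \<le> M (l - 1)" unfolding M_def
    by (rule sum_mono2) (use q epsb in auto)
  then show ?thesis using M_last by simp
qed

lemma K_bounds: "q < l \<Longrightarrow> 0 \<le> K q \<and> K q \<le> int d"
  using K_eq M_nonneg M_le by (metis of_int_0_le_iff of_int_le_iff of_int_of_nat_eq)

lemma K_last: "K (l - 1) = int d"
  using K_eq[of "l - 1"] M_last lpos by (metis diff_less of_int_eq_iff of_int_of_nat_eq zero_less_one)

definition kap :: "int \<Rightarrow> int" where
  "kap x = int d * ((x - 1) div int l) + K (nat ((x - 1) mod int l))"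

lemma kap_diff: "of_int (kap x) - of_int (kap (x - 1)) = of_nat d * E (nat ((x - 1) mod int l))"
proof -
  define y where "y = x - 1"
  define q where "q = y mod int l"
  define k where "k = y div int l"
  have yk: "y = int l * k + q" unfolding q_def k_def by simp
  have q: "0 \<le> q" "q < int l" unfolding q_def using lpos by auto
  have kx: "kap x = int d * k + K (nat q)" unfolding kap_def y_def[symmetric] q_def k_def by simp
  show ?thesis
  proof (cases "q = 0")
    case True
    have e: "y - 1 = int l * (k - 1) + (int l - 1)" using yk True by (simp add: algebra_simps)
    have dm: "(int l * (k - 1) + (int l - 1)) div int l = k - 1 \<and> (int l * (k - 1) + (int l - 1)) mod int l = int l - 1"
      by (rule divmod_eq) (use lpos in auto)
    have d1: "(y - 1) div int l = k - 1" "(y - 1) mod int l = int l - 1"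
      unfolding e using dm by blast+
    have "kap (x - 1) = int d * (k - 1) + K (l - 1)"
    proof -
      have "nat (int l - 1) = l - 1" using lpos by simp
      then show ?thesis unfolding kap_def using d1 y_def by simp
    qed
    then have "kap x - kap (x - 1) = K 0" using kx True K_last by (simp add: algebra_simps)
    then have "of_int (kap x) - of_int (kap (x - 1)) = (of_int (K 0) :: rat)" by (metis of_int_diff)
    also have "\<dots> = M 0" using K_eq lpos by simp
    finally show ?thesis using M_0 True unfolding q_def y_def by simp
  next
    case False
    have e: "y - 1 = int l * k + (q - 1)" using yk by (simp add: algebra_simps)
    have dm: "(int l * k + (q - 1)) div int l = k \<and> (int l * k + (q - 1)) mod int l = q - 1"
      by (rule divmod_eq) (use q False in auto)
    have d1: "(y - 1) div int l = k" "(y - 1) mod int l = q - 1"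
      unfolding e using dm by blast+
    have "kap (x - 1) = int d * k + K (nat (q - 1))"
      unfolding kap_def using d1 y_def by simp
    then have "kap x - kap (x - 1) = K (nat q) - K (nat (q - 1))" using kx by simp
    then have "of_int (kap x) - of_int (kap (x - 1)) = (of_int (K (nat q)) - of_int (K (nat (q - 1))) :: rat)"
      by (metis of_int_diff)
    also have "\<dots> = M (nat q) - M (nat (q - 1))" using K_eq q by (simp add: nat_less_iff)
    also have "\<dots> = of_nat d * E (nat q)"
    proof -
      have "nat q = Suc (nat (q - 1))" using q False by simp
      then show ?thesis using M_suc[of "nat (q - 1)"] by simp
    qed
    finally show ?thesis unfolding q_def y_def by simp
  qed
qed

lemma modl: "nat ((x - 1) mod int l) < l"
  using lpos by (simp add: nat_less_iff)

lemma kap_mono1: "kap (x - 1) \<le> kap x"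
proof -
  have "0 \<le> of_nat d * E (nat ((x - 1) mod int l))" using epsb modl by simp
  then have "(of_int (kap (x - 1)) :: rat) \<le> of_int (kap x)" using kap_diff[of x] by simp
  then show ?thesis by simp
qed

lemma kap_step: "(\<exists>j\<in>Jset l H r ws. (x - 1) mod int l = int j mod int l) \<longleftrightarrow> kap x = kap (x - 1)"
proof -
  have "(\<exists>j\<in>Jset l H r ws. (x - 1) mod int l = int j mod int l) \<longleftrightarrow> E (nat ((x - 1) mod int l)) = 0"
  proof
    assume "\<exists>j\<in>Jset l H r ws. (x - 1) mod int l = int j mod int l"
    then obtain j where j: "j < l" "E j = 0" "(x - 1) mod int l = int j mod int l"
      unfolding Jset_def by auto
    then have "(x - 1) mod int l = int j" by simp
    then show "E (nat ((x - 1) mod int l)) = 0" using j by simp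
  next
    assume "E (nat ((x - 1) mod int l)) = 0"
    moreover have "(x - 1) mod int l = int (nat ((x - 1) mod int l)) mod int l" using lpos by simp
    ultimately show "\<exists>j\<in>Jset l H r ws. (x - 1) mod int l = int j mod int l"
      using modl unfolding Jset_def by blast
  qed
  also have "\<dots> \<longleftrightarrow> of_nat d * E (nat ((x - 1) mod int l)) = 0" using dpos by simp
  also have "\<dots> \<longleftrightarrow> (of_int (kap x) :: rat) - of_int (kap (x - 1)) = 0" using kap_diff by simp
  also have "\<dots> \<longleftrightarrow> kap x = kap (x - 1)" by simp
  finally show ?thesis .
qed

lemma kap_fin: "finite {x. kap x = v}"
proof -
  have "{x. kap x = v} \<subseteq> {int l * (v div int d - 1) + 1 .. int l * (v div int d) + int l}"
  proof
    fix x assume "x \<in> {x. kap x = v}"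
    then have v: "kap x = v" by simp
    define k where "k = (x - 1) div int l"
    have kb: "0 \<le> K (nat ((x - 1) mod int l))" "K (nat ((x - 1) mod int l)) \<le> int d"
      using K_bounds modl by auto
    have v1: "int d * k \<le> v" "v \<le> int d * (k + 1)" using v kb unfolding kap_def k_def by (auto simp: algebra_simps)
    have "(int d * k) div int d \<le> v div int d" using v1(1) by (rule zdiv_mono1) (use dpos in simp)
    then have k1: "k \<le> v div int d" using dpos by simp
    have "v div int d \<le> (int d * (k + 1)) div int d" using v1(2) by (rule zdiv_mono1) (use dpos in simp)
    then have k2: "v div int d \<le> k + 1" using dpos by simp
    have xe: "x - 1 = int l * k + (x - 1) mod int l" unfolding k_def by simp
    have "0 \<le> (x - 1) mod int l" "(x - 1) mod int l < int l" using lpos by simp_all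
    then have x1: "int l * k \<le> x - 1" "x - 1 < int l * k + int l" using xe by linarith+
    have a: "int l * (v div int d - 1) \<le> int l * k" using k2 by (intro mult_left_mono) auto
    have b: "int l * k \<le> int l * (v div int d)" using k1 by (intro mult_left_mono) auto
    show "x \<in> {int l * (v div int d - 1) + 1 .. int l * (v div int d) + int l}"
      unfolding atLeastAtMost_iff using a b x1 by linarith
  qed
  then show ?thesis by (rule finite_subset) simp
qed

lemma is_kp: "kp l (Jset l H r ws) kap"
  by unfold_locales (use kap_step kap_mono1 kap_fin in auto)

end




lemma swp_bij: "bij (swp a b)"
proof -
  have "swp a b \<circ> swp a b = id" by (auto simp: swp_def)
  then show ?thesis using o_bij by blast
qed

lemma wperm_props:
  assumes "set ws \<subseteq> {1..<l}"
  shows "bij (wperm ws) \<and> (\<forall>x\<ge>l. wperm ws x = x)"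
  using assms
proof (induction ws)
  case Nil then show ?case by (simp add: wperm_def bij_id[unfolded id_def])
next
  case (Cons i ws)
  have e: "wperm (i # ws) = swp (i - 1) i \<circ> wperm ws" by (simp add: wperm_def)
  have il: "i < l" "i - 1 < l" using Cons.prems by auto
  have "bij (wperm (i # ws))" using e Cons swp_bij by (simp add: bij_comp)
  moreover have "\<forall>x\<ge>l. wperm (i # ws) x = x" using e Cons il by (auto simp: swp_def)
  ultimately show ?case by simp
qed

lemma inv_wperm_lt:
  assumes "set ws \<subseteq> {1..<l}" "p < l"
  shows "inv (wperm ws) p < l"
proof (rule ccontr)
  have b: "bij (wperm ws)" "\<forall>x\<ge>l. wperm ws x = x" using wperm_props[OF assms(1)] by auto
  assume "\<not> inv (wperm ws) p < l"
  then have "wperm ws (inv (wperm ws) p) = inv (wperm ws) p" using b by auto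
  moreover have "wperm ws (inv (wperm ws) p) = p" using b(1) by (simp add: bij_is_surj surj_f_inv_f)
  ultimately show False using assms(2) \<open>\<not> inv (wperm ws) p < l\<close> by simp
qed

lemma beta_set_tail:
  assumes lam: "is_partition lam"
  shows "\<exists>A. \<forall>a\<le>A. {..a} \<subseteq> beta_set r lam \<and> finite (beta_set r lam \<inter> {a<..})
     \<and> int (card (beta_set r lam \<inter> {a<..})) = r - a"
proof -
  obtain k where k: "{i. lam i \<noteq> 0} \<subseteq> {..<k}"
    using lam unfolding is_partition_def by (auto simp: finite_nat_set_iff_bounded)
  have z: "i \<ge> k \<Longrightarrow> lam i = 0" for i using k by force
  show ?thesis
  proof (intro exI[of _ "r - int k"] allI impI conjI)
    fix a assume a: "a \<le> r - int k"
    show "{..a} \<subseteq> beta_set r lam"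
    proof
      fix x assume "x \<in> {..a}"
      then have x: "x \<le> a" by simp
      define i where "i = nat (r + 1 - x)"
      have "i \<ge> k" "i \<ge> 1" using x a unfolding i_def by auto
      then have "beta r lam i = x" using z unfolding beta_def i_def using x a by simp
      then show "x \<in> beta_set r lam" using \<open>i \<ge> 1\<close> by (auto simp: mem_beta_set)
    qed
    have eq: "beta_set r lam \<inter> {a<..} = beta r lam ` {1..nat (r - a)}"
    proof
      show "beta_set r lam \<inter> {a<..} \<subseteq> beta r lam ` {1..nat (r - a)}"
      proof
        fix x assume "x \<in> beta_set r lam \<inter> {a<..}"
        then obtain i where i: "i \<ge> 1" "x = beta r lam i" "x > a" by (auto simp: mem_beta_set)
        have "i \<le> nat (r - a)"
        proof (rule ccontr)
          assume "\<not> i \<le> nat (r - a)"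
          then have "i \<ge> k" "int i > r - a" using a by auto
          then have "beta r lam i \<le> a" using z unfolding beta_def by simp
          then show False using i by simp
        qed
        then show "x \<in> beta r lam ` {1..nat (r - a)}" using i by auto
      qed
      show "beta r lam ` {1..nat (r - a)} \<subseteq> beta_set r lam \<inter> {a<..}"
      proof
        fix x assume "x \<in> beta r lam ` {1..nat (r - a)}"
        then obtain i where i: "i \<ge> 1" "i \<le> nat (r - a)" "x = beta r lam i" by auto
        then have "x > a" unfolding beta_def by simp
        then show "x \<in> beta_set r lam \<inter> {a<..}" using i by (auto simp: mem_beta_set)
      qed
    qed
    show "finite (beta_set r lam \<inter> {a<..})" using eq by simp
    have "inj_on (beta r lam) {1..nat (r - a)}"
      by (rule inj_on_subset[OF beta_inj_on[OF lam]]) auto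
    then have "card (beta_set r lam \<inter> {a<..}) = nat (r - a)" using eq by (simp add: card_image)
    then show "int (card (beta_set r lam \<inter> {a<..})) = r - a" using a by simp
  qed
qed

context params
begin

definition Xs :: "(nat \<Rightarrow> nat) list \<Rightarrow> int set" where
  "Xs lams = {int l * (c - 1) + int q + 1 | q c. q < l \<and> c \<in> beta_set (r q) (lams ! q)}"

lemma memX:
  "x \<in> Xs lams \<longleftrightarrow> (x - 1) div int l + 1 \<in> beta_set (r (nat ((x - 1) mod int l))) (lams ! nat ((x - 1) mod int l))"
proof
  assume "x \<in> Xs lams"
  then obtain q c where qc: "q < l" "c \<in> beta_set (r q) (lams ! q)" "x = int l * (c - 1) + int q + 1"
    unfolding Xs_def by blast
  have "(int l * (c - 1) + int q) div int l = c - 1 \<and> (int l * (c - 1) + int q) mod int l = int q"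
    by (rule divmod_eq) (use qc in auto)
  then have "(x - 1) div int l = c - 1" "(x - 1) mod int l = int q" using qc(3) by auto
  then show "(x - 1) div int l + 1 \<in> beta_set (r (nat ((x - 1) mod int l))) (lams ! nat ((x - 1) mod int l))"
    using qc by simp
next
  assume a: "(x - 1) div int l + 1 \<in> beta_set (r (nat ((x - 1) mod int l))) (lams ! nat ((x - 1) mod int l))"
  have "x = int l * ((x - 1) div int l + 1 - 1) + int (nat ((x - 1) mod int l)) + 1"
    using lpos by simp
  then show "x \<in> Xs lams" unfolding Xs_def using a modl by blast
qed

lemma memX2: "q < l \<Longrightarrow> int l * (c - 1) + int q + 1 \<in> Xs lams \<longleftrightarrow> c \<in> beta_set (r q) (lams ! q)"
proof -
  assume q: "q < l"
  have "(int l * (c - 1) + int q) div int l = c - 1 \<and> (int l * (c - 1) + int q) mod int l = int q"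
    by (rule divmod_eq) (use q in auto)
  then show ?thesis unfolding memX by simp
qed

lemma Xs_partition:
  assumes parts: "\<forall>q<l. is_partition (lams ! q)"
  shows "\<exists>mu. is_partition mu \<and> beta_set 0 mu = Xs lams"
proof -
  have "\<forall>q\<in>{..<l}. \<exists>A. \<forall>a\<le>A. {..a} \<subseteq> beta_set (r q) (lams ! q) \<and> finite (beta_set (r q) (lams ! q) \<inter> {a<..})
     \<and> int (card (beta_set (r q) (lams ! q) \<inter> {a<..})) = r q - a"
    using beta_set_tail parts by blast
  then obtain A where A: "\<And>q a. q < l \<Longrightarrow> a \<le> A q \<Longrightarrow> {..a} \<subseteq> beta_set (r q) (lams ! q) \<and> finite (beta_set (r q) (lams ! q) \<inter> {a<..})
     \<and> int (card (beta_set (r q) (lams ! q) \<inter> {a<..})) = r q - a"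
    by (metis lessThan_iff)
  define a0 where "a0 = Min (A ` {..<l})"
  have a0: "q < l \<Longrightarrow> a0 \<le> A q" for q unfolding a0_def by simp
  let ?B = "\<lambda>q. beta_set (r q) (lams ! q)"
  let ?f = "\<lambda>q c. int l * (c - 1) + int q + 1"
  have low: "{..int l * a0} \<subseteq> Xs lams"
  proof
    fix x assume "x \<in> {..int l * a0}"
    then have x: "x \<le> int l * a0" by simp
    define c where "c = (x - 1) div int l + 1"
    have xe: "x - 1 = int l * ((x - 1) div int l) + (x - 1) mod int l" by simp
    have "0 \<le> (x - 1) mod int l" using lpos by simp
    moreover have "int l * (c - 1) = int l * ((x - 1) div int l)" unfolding c_def by simp
    ultimately have "int l * (c - 1) \<le> x - 1" using xe by linarith
    then have "int l * (c - 1) < int l * a0" using x by simp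
    then have "c - 1 < a0" using lpos by (simp add: mult_less_cancel_left)
    then have "c \<le> A (nat ((x - 1) mod int l))" using a0[OF modl[of x]] by simp
    then have "c \<in> ?B (nat ((x - 1) mod int l))" using A[OF modl] by blast
    then show "x \<in> Xs lams" unfolding memX c_def .
  qed
  have U: "Xs lams \<inter> {int l * a0<..} = (\<Union>q\<in>{..<l}. ?f q ` (?B q \<inter> {a0<..}))"
  proof
    show "Xs lams \<inter> {int l * a0<..} \<subseteq> (\<Union>q\<in>{..<l}. ?f q ` (?B q \<inter> {a0<..}))"
    proof
      fix x assume "x \<in> Xs lams \<inter> {int l * a0<..}"
      then obtain q c where qc: "q < l" "c \<in> ?B q" "x = ?f q c" "x > int l * a0" unfolding Xs_def by auto
      have "c > a0"
      proof (rule ccontr)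
        assume "\<not> c > a0" then have "c - 1 \<le> a0 - 1" by simp
        then have m: "int l * (c - 1) \<le> int l * (a0 - 1)" by (intro mult_left_mono) auto
        have "int l * (a0 - 1) + int l = int l * a0" by (simp add: algebra_simps)
        moreover have "int q + 1 \<le> int l" using qc(1) by simp
        ultimately show False using qc(3,4) m by linarith
      qed
      then show "x \<in> (\<Union>q\<in>{..<l}. ?f q ` (?B q \<inter> {a0<..}))" using qc by auto
    qed
    show "(\<Union>q\<in>{..<l}. ?f q ` (?B q \<inter> {a0<..})) \<subseteq> Xs lams \<inter> {int l * a0<..}"
    proof
      fix x assume "x \<in> (\<Union>q\<in>{..<l}. ?f q ` (?B q \<inter> {a0<..}))"
      then obtain q c where qc: "q < l" "c \<in> ?B q" "c > a0" "x = ?f q c" by auto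
      have "int l * a0 \<le> int l * (c - 1)" using qc by (intro mult_left_mono) auto
      then have "x > int l * a0" using qc(4) by linarith
      moreover have "x \<in> Xs lams" using qc unfolding Xs_def by blast
      ultimately show "x \<in> Xs lams \<inter> {int l * a0<..}" by simp
    qed
  qed
  have finq: "q < l \<Longrightarrow> finite (?B q \<inter> {a0<..})" for q using A[of q a0] a0 by auto
  have fin: "finite (Xs lams \<inter> {int l * a0<..})" unfolding U using finq by auto
  have injf: "inj_on (?f q) S" for q S using lpos by (auto simp: inj_on_def)
  have disj: "?f q ` (?B q \<inter> {a0<..}) \<inter> ?f q' ` (?B q' \<inter> {a0<..}) = {}" if "q < l" "q' < l" "q \<noteq> q'" for q q'
  proof (rule ccontr)
    assume "?f q ` (?B q \<inter> {a0<..}) \<inter> ?f q' ` (?B q' \<inter> {a0<..}) \<noteq> {}"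
    then obtain c c' where "?f q c = ?f q' c'" by blast
    then have "(int l * (c - 1) + int q) mod int l = (int l * (c' - 1) + int q') mod int l" by simp
    moreover have "(int l * (c - 1) + int q) div int l = c - 1 \<and> (int l * (c - 1) + int q) mod int l = int q"
      by (rule divmod_eq) (use that in auto)
    moreover have "(int l * (c' - 1) + int q') div int l = c' - 1 \<and> (int l * (c' - 1) + int q') mod int l = int q'"
      by (rule divmod_eq) (use that in auto)
    ultimately show False using that by simp
  qed
  have "card (Xs lams \<inter> {int l * a0<..}) = (\<Sum>q<l. card (?f q ` (?B q \<inter> {a0<..})))"
    unfolding U by (rule card_UN_disjoint) (use finq disj in auto)
  also have "\<dots> = (\<Sum>q<l. card (?B q \<inter> {a0<..}))" using injf by (simp add: card_image)
  finally have "int (card (Xs lams \<inter> {int l * a0<..})) = (\<Sum>q<l. int (card (?B q \<inter> {a0<..})))" by simp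
  also have "\<dots> = (\<Sum>q<l. r q - a0)" using A a0 by (intro sum.cong) auto
  also have "\<dots> = 0 - int l * a0" using rsum by (simp add: sum_subtractf)
  finally have c: "int (card (Xs lams \<inter> {int l * a0<..})) = 0 - int l * a0" .
  show ?thesis by (rule exists_partition[OF low fin c])
qed

lemma tau_props:
  assumes parts: "\<forall>q<l. is_partition (lams ! q)"
  shows "is_partition (tau l r lams) \<and> beta_set 0 (tau l r lams) = Xs lams"
proof -
  have eq: "{int l * (c - 1) + int q + 1 | q c. q < l \<and> c \<in> beta_set (r q) (lams ! q)} = Xs lams"
    unfolding Xs_def by simp
  have ex1: "\<exists>!mu. is_partition mu \<and> beta_set 0 mu = Xs lams"
    using Xs_partition[OF parts] beta_set_inj by blast
  show ?thesis unfolding tau_def rsum eq by (rule theI'[OF ex1])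
qed

end



lemma arith1:
  fixes d k m a t :: int
  assumes "0 < d" "0 \<le> a" "a \<le> d" "1 \<le> t" "t \<le> d - 1" "d * k + a = d * m + t"
  shows "k = m \<and> a = t"
proof -
  have e: "d * (k - m) = t - a" using assms(6) by (simp add: algebra_simps)
  have "k = m"
  proof (rule ccontr)
    assume "k \<noteq> m"
    then consider "k - m \<ge> 1" | "k - m \<le> -1" by linarith
    then show False
    proof cases
      case 1 then have "d * 1 \<le> d * (k - m)" using assms(1) by (intro mult_left_mono) auto
      then show False using e assms by linarith
    next
      case 2 then have "d * (k - m) \<le> d * (-1)" using assms(1) by (intro mult_left_mono) auto
      then show False using e assms by linarith
    qed
  qed
  then show ?thesis using e by simp
qed

lemma arith2:
  fixes d k x a :: int
  assumes "0 < d" "0 \<le> a" "a \<le> d" "d * k + a = d * x"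
  shows "(k = x - 1 \<and> a = d) \<or> (k = x \<and> a = 0)"
proof -
  have e: "d * (x - k) = a" using assms(4) by (simp add: algebra_simps)
  consider "x - k \<ge> 2" | "x - k = 1" | "x - k = 0" | "x - k \<le> -1" by linarith
  then show ?thesis
  proof cases
    case 1 then have "d * 2 \<le> d * (x - k)" using assms(1) by (intro mult_left_mono) auto
    then show ?thesis using e assms by linarith
  next
    case 2 then show ?thesis using e by simp
  next
    case 3 then show ?thesis using e by simp
  next
    case 4 then have "d * (x - k) \<le> d * (-1)" using assms(1) by (intro mult_left_mono) auto
    then show ?thesis using e assms by linarith
  qed
qed

context params
begin

lemma Iset_eq: "Iset l d H r ws t = {p. p < l \<and> K p = int t}"
proof -
  have "p < l \<Longrightarrow> (\<Sum>i\<le>p. of_nat d * E i) = of_nat t \<longleftrightarrow> K p = int t" for p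
    using K_eq[of p] unfolding M_def by (metis of_int_eq_iff of_int_of_nat_eq)
  then show ?thesis unfolding Iset_def by auto
qed

lemma Cp_eq: "length lam = l \<Longrightarrow> p < l \<Longrightarrow> Cp ws r lam p = beta_set (r p) (wmp ws lam ! p)"
  unfolding Cp_def wmp_def by simp

lemma kap_f: "p < l \<Longrightarrow> kap (int l * (c - 1) + int p + 1) = int d * (c - 1) + K p"
proof -
  assume p: "p < l"
  have "(int l * (c - 1) + int p) div int l = c - 1 \<and> (int l * (c - 1) + int p) mod int l = int p"
    by (rule divmod_eq) (use p in auto)
  then show ?thesis unfolding kap_def by simp
qed

lemma Xs_decomp:
  assumes "z \<in> Xs lams"
  obtains q c where "q < l" "z = int l * (c - 1) + int q + 1" "c \<in> beta_set (r q) (lams ! q)"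
    "kap z = int d * (c - 1) + K q"
  using assms kap_f unfolding Xs_def by blast

lemma Cmult_mid:
  assumes len: "length lam = l" and t: "1 \<le> t" "t \<le> d - 1"
  shows "Cmult l d H r ws t lam x = cnt kap (Xs (wmp ws lam)) (int d * (x - 1) + int t)"
proof -
  let ?f = "\<lambda>p. int l * (x - 1) + int p + 1"
  let ?S = "{p \<in> Iset l d H r ws t. x \<in> Cp ws r lam p}"
  have eq: "{z \<in> Xs (wmp ws lam). kap z = int d * (x - 1) + int t} = ?f ` ?S"
  proof
    show "{z \<in> Xs (wmp ws lam). kap z = int d * (x - 1) + int t} \<subseteq> ?f ` ?S"
    proof
      fix z assume z: "z \<in> {z \<in> Xs (wmp ws lam). kap z = int d * (x - 1) + int t}"
      then obtain q c where qc: "q < l" "z = int l * (c - 1) + int q + 1" "c \<in> beta_set (r q) (wmp ws lam ! q)"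
        "kap z = int d * (c - 1) + K q" by (blast elim: Xs_decomp)
      have "c - 1 = x - 1 \<and> K q = int t"
        by (rule arith1[of "int d"]) (use dpos K_bounds[OF qc(1)] t qc(4) z in auto)
      then have "c = x" "K q = int t" by auto
      then show "z \<in> ?f ` ?S" using qc Cp_eq[OF len qc(1)] Iset_eq by auto
    qed
    show "?f ` ?S \<subseteq> {z \<in> Xs (wmp ws lam). kap z = int d * (x - 1) + int t}"
    proof
      fix z assume "z \<in> ?f ` ?S"
      then obtain p where p: "p < l" "K p = int t" "x \<in> Cp ws r lam p" "z = ?f p"
        using Iset_eq by auto
      then show "z \<in> {z \<in> Xs (wmp ws lam). kap z = int d * (x - 1) + int t}"
        using memX2[OF p(1)] kap_f[OF p(1)] Cp_eq[OF len p(1)] by auto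
    qed
  qed
  have "inj_on ?f ?S" by (auto simp: inj_on_def)
  then have "card (?f ` ?S) = card ?S" by (rule card_image)
  then show ?thesis using eq t unfolding Cmult_def cnt_def by simp
qed

lemma Cmult_edge:
  assumes len: "length lam = l" and t: "\<not> (1 \<le> t \<and> t \<le> d - 1)"
  shows "Cmult l d H r ws t lam x = cnt kap (Xs (wmp ws lam)) (int d * x)"
proof -
  let ?f = "\<lambda>c p. int l * (c - 1) + int p + 1"
  let ?S0 = "{p \<in> Iset l d H r ws 0. x + 1 \<in> Cp ws r lam p}"
  let ?Sd = "{p \<in> Iset l d H r ws d. x \<in> Cp ws r lam p}"
  have eq: "{z \<in> Xs (wmp ws lam). kap z = int d * x} = ?f x ` ?Sd \<union> ?f (x + 1) ` ?S0"
  proof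
    show "{z \<in> Xs (wmp ws lam). kap z = int d * x} \<subseteq> ?f x ` ?Sd \<union> ?f (x + 1) ` ?S0"
    proof
      fix z assume z: "z \<in> {z \<in> Xs (wmp ws lam). kap z = int d * x}"
      then obtain q c where qc: "q < l" "z = int l * (c - 1) + int q + 1" "c \<in> beta_set (r q) (wmp ws lam ! q)"
        "kap z = int d * (c - 1) + K q" by (blast elim: Xs_decomp)
      have "(c - 1 = x - 1 \<and> K q = int d) \<or> (c - 1 = x \<and> K q = 0)"
        by (rule arith2) (use dpos K_bounds[OF qc(1)] qc(4) z in auto)
      then show "z \<in> ?f x ` ?Sd \<union> ?f (x + 1) ` ?S0"
      proof
        assume "c - 1 = x - 1 \<and> K q = int d"
        then have "c = x" "K q = int d" by auto
        then have "q \<in> ?Sd" using qc Cp_eq[OF len qc(1)] Iset_eq by auto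
        then show ?thesis using qc \<open>c = x\<close> by auto
      next
        assume "c - 1 = x \<and> K q = 0"
        then have "c = x + 1" "K q = 0" by auto
        then have "q \<in> ?S0" using qc Cp_eq[OF len qc(1)] Iset_eq by auto
        then show ?thesis using qc \<open>c = x + 1\<close> by auto
      qed
    qed
    show "?f x ` ?Sd \<union> ?f (x + 1) ` ?S0 \<subseteq> {z \<in> Xs (wmp ws lam). kap z = int d * x}"
    proof
      fix z assume "z \<in> ?f x ` ?Sd \<union> ?f (x + 1) ` ?S0"
      then show "z \<in> {z \<in> Xs (wmp ws lam). kap z = int d * x}"
      proof
        assume "z \<in> ?f x ` ?Sd"
        then obtain p where p: "p < l" "K p = int d" "x \<in> Cp ws r lam p" "z = ?f x p"
          using Iset_eq by auto
        have "int d * (x - 1) + int d = int d * x" by (simp add: algebra_simps)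
        then show ?thesis using p memX2[OF p(1)] kap_f[OF p(1)] Cp_eq[OF len p(1)] by auto
      next
        assume "z \<in> ?f (x + 1) ` ?S0"
        then obtain p where p: "p < l" "K p = 0" "x + 1 \<in> Cp ws r lam p" "z = ?f (x + 1) p"
          using Iset_eq by auto
        then show ?thesis using memX2[OF p(1), of "x + 1"] kap_f[OF p(1), of "x + 1"] Cp_eq[OF len p(1)] by auto
      qed
    qed
  qed
  have fin: "finite ?Sd" "finite ?S0" unfolding Iset_def by auto
  have disj: "?f x ` ?Sd \<inter> ?f (x + 1) ` ?S0 = {}"
  proof (rule ccontr)
    assume "?f x ` ?Sd \<inter> ?f (x + 1) ` ?S0 \<noteq> {}"
    then obtain p p' where pp: "p \<in> ?Sd" "p' \<in> ?S0" "?f x p = ?f (x + 1) p'" by blast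
    then have "p < l" unfolding Iset_def by auto
    moreover have "int l * (x + 1 - 1) = int l * (x - 1) + int l" by (simp add: algebra_simps)
    ultimately show False using pp(3) by linarith
  qed
  have i1: "inj_on (?f x) ?Sd" "inj_on (?f (x + 1)) ?S0" by (auto simp: inj_on_def)
  have "card (?f x ` ?Sd \<union> ?f (x + 1) ` ?S0) = card ?Sd + card ?S0"
    using card_Un_disjoint[OF _ _ disj] fin i1 by (simp add: card_image)
  moreover have "Cmult l d H r ws t lam x = card ?S0 + card ?Sd" unfolding Cmult_def using t by (simp only: if_False)
  ultimately show ?thesis using eq unfolding cnt_def by simp
qed

lemma Cmult_iff:
  assumes "length lam = l" "length mu = l"
  shows "(\<forall>t\<in>{0..d}. Cmult l d H r ws t lam = Cmult l d H r ws t mu)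
    \<longleftrightarrow> cnt kap (Xs (wmp ws lam)) = cnt kap (Xs (wmp ws mu))"
proof
  assume c: "cnt kap (Xs (wmp ws lam)) = cnt kap (Xs (wmp ws mu))"
  show "\<forall>t\<in>{0..d}. Cmult l d H r ws t lam = Cmult l d H r ws t mu"
  proof (intro ballI ext)
    fix t x
    show "Cmult l d H r ws t lam x = Cmult l d H r ws t mu x"
    proof (cases "1 \<le> t \<and> t \<le> d - 1")
      case True then show ?thesis using Cmult_mid[OF assms(1)] Cmult_mid[OF assms(2)] c by simp
    next
      case False then show ?thesis using Cmult_edge[OF assms(1)] Cmult_edge[OF assms(2)] c by simp
    qed
  qed
next
  assume c: "\<forall>t\<in>{0..d}. Cmult l d H r ws t lam = Cmult l d H r ws t mu"
  show "cnt kap (Xs (wmp ws lam)) = cnt kap (Xs (wmp ws mu))"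
  proof
    fix v
    define x where "x = (v - 1) div int d + 1"
    define t' where "t' = (v - 1) mod int d + 1"
    have v: "v = int d * (x - 1) + t'" unfolding x_def t'_def by simp
    have t1: "1 \<le> t'" "t' \<le> int d" unfolding t'_def using dpos
      by simp_all (smt (verit) of_nat_0_less_iff pos_mod_bound)
    show "cnt kap (Xs (wmp ws lam)) v = cnt kap (Xs (wmp ws mu)) v"
    proof (cases "t' \<le> int d - 1")
      case True
      define t where "t = nat t'"
      have tt: "1 \<le> t" "t \<le> d - 1" "int t = t'" unfolding t_def using t1 True by auto
      have "Cmult l d H r ws t lam x = Cmult l d H r ws t mu x" using c tt by auto
      then show ?thesis using Cmult_mid[OF assms(1) tt(1,2)] Cmult_mid[OF assms(2) tt(1,2)] v tt(3) by simp
    next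
      case False
      then have "t' = int d" using t1 by simp
      then have vx: "v = int d * x" using v by (simp add: algebra_simps)
      have nd: "\<not> (1 \<le> d \<and> d \<le> d - 1)" using dpos by simp
      have "Cmult l d H r ws d lam x = Cmult l d H r ws d mu x" using c by auto
      then show ?thesis using Cmult_edge[OF assms(1) nd] Cmult_edge[OF assms(2) nd] vx by simp
    qed
  qed
qed

end



theorem corollary3p11:
  fixes l n d :: nat and H :: "nat \<Rightarrow> rat" and r :: "nat \<Rightarrow> int" and ws :: "nat list"
    and lam mu :: "(nat \<Rightarrow> nat) list"
  assumes "0 < l" and "0 < n" and "0 < d"
    and "\<forall>i\<in>{1..<l}. of_nat d * H i \<in> \<int>"
    and "(\<Sum>q<l. r q) = 0"
    and "set ws \<subseteq> {1..<l}"
    and "\<forall>i<l. 0 \<le> eps l H r ws i \<and> eps l H r ws i \<le> 1"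
    and "lam \<in> multipartitions l n" and "mu \<in> multipartitions l n"
  shows "heart l (Jset l H r ws) (tau l r (wmp ws lam)) = heart l (Jset l H r ws) (tau l r (wmp ws mu))
     \<longleftrightarrow> (\<forall>t\<in>{0..d}. Cmult l d H r ws t lam = Cmult l d H r ws t mu)"
proof -
  interpret params l d H r ws
    by unfold_locales (use assms in auto)
  interpret kp l "Jset l H r ws" kap by (rule is_kp)
  have parts: "\<forall>q<l. is_partition (wmp ws la ! q)" and len: "length la = l"
    if "la \<in> multipartitions l n" for la
  proof -
    show len: "length la = l" using that unfolding multipartitions_def by simp
    show "\<forall>q<l. is_partition (wmp ws la ! q)"
    proof (intro allI impI)
      fix q assume q: "q < l"
      have "wmp ws la ! q = la ! inv (wperm ws) q" unfolding wmp_def using len q by simp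
      moreover have "inv (wperm ws) q < l" by (rule inv_wperm_lt[OF wsl q])
      ultimately show "is_partition (wmp ws la ! q)" using that unfolding multipartitions_def by auto
    qed
  qed
  have A: "is_partition (tau l r (wmp ws lam))" "beta_set 0 (tau l r (wmp ws lam)) = Xs (wmp ws lam)"
    using tau_props[OF parts[OF assms(8)]] by auto
  have B: "is_partition (tau l r (wmp ws mu))" "beta_set 0 (tau l r (wmp ws mu)) = Xs (wmp ws mu)"
    using tau_props[OF parts[OF assms(9)]] by auto
  show ?thesis
    using heart_iff[OF A(1) B(1)] A(2) B(2) Cmult_iff[OF len[OF assms(8)] len[OF assms(9)]] by simp
qed



end
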